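(* Let $n$ be a positive integer and let $p_1,\dots,p_r$ be pairwise coprime positive integers, and $m=\prod_{i=1}^r p_i$. Then $P(m,n)=\mathrm{lcm}\left(P(p_1,n),\dots,P(p_r,n)\right)$.
   Context: For positive integers $m,n$, let $\mathbf{Z}_m$ be the integers modulo $m$ and $T:\mathbf{Z}_m^n\to\mathbf{Z}_m^n$, $T(a_0,\dots,a_{n-1})=(a_0+a_1,a_1+a_2,\dots,a_{n-1}+a_0)$. For $\mathbf{a}\in\mathbf{Z}_m^n$ the cycle length of $(T^k\mathbf{a})_{k\ge0}$ is the smallest positive integer $P$ such that there is $N$ with $T^{k+P}\mathbf{a}=T^k\mathbf{a}$ for all $k\ge N$. $P(m,n)$ denotes the maximum of these cycle lengths over all $\mathbf{a}\in\mathbf{Z}_m^n$. *)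

theory Defs
  imports Main
begin

text \<open>Elements of Z_m^n are represented as functions a :: nat => int with
  components a i in {0..<m} for i < n (standard representatives) and a i = 0 for i >= n.
  Indices are taken modulo n.\<close>

definition vecs :: "nat \<Rightarrow> nat \<Rightarrow> (nat \<Rightarrow> int) set" where
  "vecs m n = {a. (\<forall>i<n. 0 \<le> a i \<and> a i < int m) \<and> (\<forall>i\<ge>n. a i = 0)}"

definition Tmap :: "nat \<Rightarrow> nat \<Rightarrow> (nat \<Rightarrow> int) \<Rightarrow> (nat \<Rightarrow> int)" where
  "Tmap m n a = (\<lambda>i. if i < n then (a i + a (Suc i mod n)) mod int m else 0)"

definition cycle_length :: "nat \<Rightarrow> nat \<Rightarrow> (nat \<Rightarrow> int) \<Rightarrow> nat" where
  "cycle_length m n a =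
     (LEAST P. 0 < P \<and> (\<exists>N. \<forall>k\<ge>N. (Tmap m n ^^ (k + P)) a = (Tmap m n ^^ k) a))"

definition Pmax :: "nat \<Rightarrow> nat \<Rightarrow> nat" where
  "Pmax m n = Max (cycle_length m n ` vecs m n)"

end

theory Submission
  imports Defs
begin

definition TZ :: "nat \<Rightarrow> (nat \<Rightarrow> int) \<Rightarrow> (nat \<Rightarrow> int)" where
  "TZ n a = (\<lambda>i. a i + a (Suc i mod n))"
definition red :: "nat \<Rightarrow> nat \<Rightarrow> (nat \<Rightarrow> int) \<Rightarrow> (nat \<Rightarrow> int)" where
  "red m n a = (\<lambda>i. if i < n then a i mod int m else 0)"
definition EP :: "(nat \<Rightarrow> 'a) \<Rightarrow> nat \<Rightarrow> bool" where
  "EP f P \<longleftrightarrow> (\<exists>N. \<forall>k\<ge>N. f (k + P) = f k)"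
definition dl :: "nat \<Rightarrow> int" where "dl = (\<lambda>i. if i = 0 then 1 else 0)"
definition sh :: "nat \<Rightarrow> nat \<Rightarrow> (nat \<Rightarrow> int) \<Rightarrow> (nat \<Rightarrow> int)" where
  "sh n s x = (\<lambda>i. x ((i + s) mod n))"

lemma EP_add: assumes "EP f a" "EP f b" shows "EP f (a + b)"
proof -
  obtain N1 where 1: "\<forall>k\<ge>N1. f (k + a) = f k" using assms(1) unfolding EP_def by blast
  obtain N2 where 2: "\<forall>k\<ge>N2. f (k + b) = f k" using assms(2) unfolding EP_def by blast
  have "\<forall>k\<ge>N1 + N2. f (k + (a + b)) = f k"
  proof (intro allI impI)
    fix k assume "k \<ge> N1 + N2"
    then have "f ((k + a) + b) = f (k + a)" "f (k + a) = f k" using 1 2 by auto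
    then show "f (k + (a + b)) = f k" by (simp add: add.assoc)
  qed
  then show ?thesis unfolding EP_def by blast
qed

lemma EP_sub: assumes "EP f (a + b)" "EP f a" shows "EP f b"
proof -
  obtain N1 where 1: "\<forall>k\<ge>N1. f (k + (a + b)) = f k" using assms(1) unfolding EP_def by blast
  obtain N2 where 2: "\<forall>k\<ge>N2. f (k + a) = f k" using assms(2) unfolding EP_def by blast
  have "\<forall>k\<ge>N1 + N2. f (k + b) = f k"
  proof (intro allI impI)
    fix k assume "k \<ge> N1 + N2"
    then have "f ((k + b) + a) = f (k + b)" "f (k + (a + b)) = f k" using 1 2 by auto
    then show "f (k + b) = f k" by (simp add: ac_simps)
  qed
  then show ?thesis unfolding EP_def by blast
qed

lemma EP_mult: assumes "EP f a" shows "EP f (a * q)"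
proof (induction q)
  case 0
  then show ?case unfolding EP_def by auto
next
  case (Suc q)
  then show ?case using EP_add[OF Suc assms] by (simp add: add.commute)
qed

lemma EP_least_dvd:
  assumes "EP f P" "0 < P"
  shows "EP f x \<longleftrightarrow> (LEAST P. 0 < P \<and> EP f P) dvd x"
proof -
  define L where "L = (LEAST P. 0 < P \<and> EP f P)"
  have L: "0 < L" "EP f L" using LeastI[of "\<lambda>P. 0 < P \<and> EP f P", OF conjI[OF assms(2,1)]]
    unfolding L_def by auto
  have Lmin: "\<And>y. 0 < y \<Longrightarrow> EP f y \<Longrightarrow> L \<le> y" unfolding L_def by (simp add: Least_le)
  show ?thesis unfolding L_def[symmetric]
  proof
    assume x: "EP f x"
    have "x = L * (x div L) + x mod L" by simp
    have "EP f (x mod L)"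
      using EP_sub[of f "L * (x div L)" "x mod L"] x EP_mult[OF L(2)] by simp
    then have "x mod L = 0" using Lmin[of "x mod L"] L(1) mod_less_divisor[OF L(1), of x] by fastforce
    then show "L dvd x" by auto
  next
    assume "L dvd x"
    then obtain q where "x = L * q" by blast
    then show "EP f x" using EP_mult[OF L(2)] by simp
  qed
qed

lemma orbit_EP:
  assumes "finite V" "\<And>k. f k \<in> V" "\<And>k. f (Suc k) = F (f k)"
  shows "\<exists>P>0. EP f P"
proof -
  have "\<not> inj_on f {..card V}"
  proof
    assume "inj_on f {..card V}"
    then have "card {..card V} \<le> card V" using card_inj_on_le[of f "{..card V}" V] assms(1,2) by blast
    then show False by simp
  qed
  then obtain i j where ij: "i \<le> card V" "j \<le> card V" "i \<noteq> j" "f i = f j" unfolding inj_on_def by blast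
  have "\<exists>i j. i < j \<and> f i = f j"
  proof (cases "i < j")
    case True then show ?thesis using ij by blast
  next
    case False then have "j < i" using ij by simp
    then show ?thesis using ij by metis
  qed
  then obtain i j where ij: "i < j" "f i = f j" by blast
  have sh: "f (i + t) = f (j + t)" for t
    by (induction t) (use ij assms(3) in auto)
  have "\<forall>k\<ge>i. f (k + (j - i)) = f k"
  proof (intro allI impI)
    fix k assume "i \<le> k"
    then have "k + (j - i) = j + (k - i)" "k = i + (k - i)" using ij by auto
    then show "f (k + (j - i)) = f k" using sh[of "k - i"] by metis
  qed
  then have "EP f (j - i)" unfolding EP_def by blast
  then show ?thesis using ij by (intro exI[of _ "j - i"]) simp
qed

lemma finite_vecs: "finite (vecs m n)"
proof -
  have sub: "vecs m n \<subseteq> (\<lambda>xs i. if i < n then xs ! i else 0) ` {xs. set xs \<subseteq> {0..<int m} \<and> length xs = n}"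
  proof
    fix a assume a: "a \<in> vecs m n"
    have a1: "\<forall>i<n. 0 \<le> a i \<and> a i < int m" and a2: "\<forall>i\<ge>n. a i = 0"
      using a unfolding vecs_def by blast+
    have "a i = (if i < n then map a [0..<n] ! i else 0)" for i
    proof (cases "i < n")
      case True then show ?thesis by simp
    next
      case False then show ?thesis using a2 by simp
    qed
    then have e: "a = (\<lambda>i. if i < n then map a [0..<n] ! i else 0)" by (rule ext)
    have "set (map a [0..<n]) \<subseteq> {0..<int m}"
    proof
      fix x assume "x \<in> set (map a [0..<n])"
      then obtain i where "i < n" "x = a i" by auto
      then show "x \<in> {0..<int m}" using a1 by simp
    qed
    then have "map a [0..<n] \<in> {xs. set xs \<subseteq> {0..<int m} \<and> length xs = n}" by simp
    then show "a \<in> (\<lambda>xs i. if i < n then xs ! i else 0) ` {xs. set xs \<subseteq> {0..<int m} \<and> length xs = n}"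
      using e by (rule rev_image_eqI)
  qed
  have fl: "finite {xs. set xs \<subseteq> {0..<int m} \<and> length xs = n}"
    by (rule finite_lists_length_eq) simp
  show ?thesis by (rule finite_subset[OF sub finite_imageI[OF fl]])
qed

lemma Tmap_red: "Tmap m n x = red m n (TZ n x)"
  by (simp add: Tmap_def red_def TZ_def fun_eq_iff)

lemma red_TZ_red: "0 < n \<Longrightarrow> red m n (TZ n (red m n y)) = red m n (TZ n y)"
  by (auto simp: red_def TZ_def fun_eq_iff mod_add_eq)

lemma red_red: "red m n (red m n x) = red m n x"
  by (auto simp: red_def fun_eq_iff)

lemma red_eq_TZpow: "0 < n \<Longrightarrow> red m n x = red m n y \<Longrightarrow>
    red m n ((TZ n ^^ k) x) = red m n ((TZ n ^^ k) y)"
proof (induction k)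
  case 0 then show ?case by simp
next
  case (Suc k)
  then have "red m n (TZ n ((TZ n ^^ k) x)) = red m n (TZ n ((TZ n ^^ k) y))"
    using red_TZ_red[of n m "(TZ n ^^ k) x"] red_TZ_red[of n m "(TZ n ^^ k) y"] by metis
  then show ?case by simp
qed

lemma Tmap_pow: "0 < n \<Longrightarrow> (Tmap m n ^^ k) (red m n x) = red m n ((TZ n ^^ k) x)"
proof (induction k)
  case 0 then show ?case by simp
next
  case (Suc k)
  then show ?case by (simp add: Tmap_red red_TZ_red)
qed

lemma red_vecs: "a \<in> vecs m n \<Longrightarrow> red m n a = a"
  by (auto simp: red_def vecs_def fun_eq_iff)

lemma red_in_vecs: "0 < m \<Longrightarrow> red m n x \<in> vecs m n"
  by (auto simp: red_def vecs_def)

lemma red_eq_iff: "red m n u = red m n v \<longleftrightarrow> (\<forall>j<n. u j mod int m = v j mod int m)"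
  by (auto simp: red_def fun_eq_iff)

lemma TZpow_sum: "finite J \<Longrightarrow> (TZ n ^^ k) (\<lambda>i. \<Sum>j\<in>J. f j i) = (\<lambda>i. \<Sum>j\<in>J. (TZ n ^^ k) (f j) i)"
proof (induction k)
  case 0 then show ?case by simp
next
  case (Suc k)
  then show ?case by (simp add: TZ_def sum.distrib)
qed

lemma TZpow_smult: "(TZ n ^^ k) (\<lambda>i. c * f i) = (\<lambda>i. c * (TZ n ^^ k) f i)"
proof (induction k)
  case 0 then show ?case by simp
next
  case (Suc k)
  then show ?case by (simp add: TZ_def distrib_left)
qed

lemma TZ_sh: "TZ n (sh n s x) = sh n s (TZ n x)"
proof -
  have "(Suc i mod n + s) mod n = Suc ((i + s) mod n) mod n" for i
    by (simp add: mod_simps)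
  then show ?thesis by (simp add: TZ_def sh_def fun_eq_iff)
qed

lemma TZpow_sh: "(TZ n ^^ k) (sh n s x) = sh n s ((TZ n ^^ k) x)"
  by (induction k) (simp_all add: TZ_sh)

lemma TZpow_agree: "0 < n \<Longrightarrow> \<forall>i<n. x i = y i \<Longrightarrow> i < n \<Longrightarrow> (TZ n ^^ k) x i = (TZ n ^^ k) y i"
proof (induction k arbitrary: i)
  case 0 then show ?case by simp
next
  case (Suc k)
  then show ?case by (simp add: TZ_def)
qed

lemma sh_dl: assumes "i < n" "j < n" shows "sh n (n - j) dl i = (if j = i then 1 else 0)"
proof (cases "j = i")
  case True
  then have "i + (n - j) = n" using assms by arith
  then show ?thesis using True by (simp add: sh_def dl_def)
next
  case False
  have "(i + (n - j)) mod n \<noteq> 0"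
  proof (cases "j < i")
    case True
    then have e: "i + (n - j) = (i - j) + n" using assms by arith
    have "i - j < n" "0 < i - j" using True assms by arith+
    then have "((i - j) + n) mod n = i - j" by (simp only: mod_add_self2 mod_less)
    then show ?thesis using e \<open>0 < i - j\<close> by simp
  next
    case False
    then have "i + (n - j) < n" "0 < i + (n - j)" using assms \<open>j \<noteq> i\<close> by arith+
    then have "(i + (n - j)) mod n = i + (n - j)" by (simp only: mod_less)
    then show ?thesis using \<open>0 < i + (n - j)\<close> assms by simp
  qed
  then show ?thesis using False by (simp add: sh_def dl_def)
qed

lemma decomp: "i < n \<Longrightarrow> a i = (\<Sum>j<n. a j * sh n (n - j) dl i)"
proof -
  assume i: "i < n"
  have "(\<Sum>j<n. a j * sh n (n - j) dl i) = (\<Sum>j<n. if j = i then a j else 0)"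
    by (rule sum.cong) (auto simp: sh_dl i)
  also have "\<dots> = a i" using i by simp
  finally show ?thesis by simp
qed

lemma sum_mod_cong: "(\<And>j. j \<in> J \<Longrightarrow> (f j :: int) mod m = g j mod m) \<Longrightarrow>
   (\<Sum>j\<in>J. f j) mod m = (\<Sum>j\<in>J. g j) mod m"
proof -
  assume h: "\<And>j. j \<in> J \<Longrightarrow> (f j :: int) mod m = g j mod m"
  have "(\<Sum>j\<in>J. f j mod m) = (\<Sum>j\<in>J. g j mod m)" by (rule sum.cong) (auto simp: h)
  then show ?thesis by (metis mod_sum_eq)
qed

lemma TZpow_formula: assumes "0 < n" "i < n"
  shows "(TZ n ^^ k) a i = (\<Sum>j<n. a j * (TZ n ^^ k) dl ((i + (n - j)) mod n))"
proof -
  define A where "A = (\<lambda>i. \<Sum>j<n. a j * sh n (n - j) dl i)"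
  have ag: "\<forall>i<n. a i = A i"
  proof (intro allI impI)
    fix i assume "i < n"
    then show "a i = A i" unfolding A_def by (rule decomp)
  qed
  have "(TZ n ^^ k) a i = (TZ n ^^ k) A i"
    by (rule TZpow_agree[OF assms(1) ag assms(2)])
  also have "(TZ n ^^ k) A = (\<lambda>i. \<Sum>j<n. (TZ n ^^ k) (\<lambda>i. a j * sh n (n - j) dl i) i)"
    unfolding A_def by (rule TZpow_sum) simp
  also have "\<dots> = (\<lambda>i. \<Sum>j<n. a j * sh n (n - j) ((TZ n ^^ k) dl) i)"
  proof -
    have "(TZ n ^^ k) (\<lambda>i. a j * sh n (n - j) dl i) = (\<lambda>i. a j * sh n (n - j) ((TZ n ^^ k) dl) i)" for j
      using TZpow_smult[where n=n and k=k and c="a j" and f="sh n (n - j) dl"] TZpow_sh[where n=n and k=k and s="n - j" and x=dl] by simp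
    then show ?thesis by simp
  qed
  finally show ?thesis by (simp add: sh_def)
qed

lemma period_transfer:
  assumes n: "0 < n" and E: "EP (\<lambda>k. red m n ((TZ n ^^ k) dl)) P"
  shows "EP (\<lambda>k. red m n ((TZ n ^^ k) a)) P"
proof -
  obtain N where N: "\<forall>k\<ge>N. red m n ((TZ n ^^ (k + P)) dl) = red m n ((TZ n ^^ k) dl)"
    using E unfolding EP_def by blast
  have "\<forall>k\<ge>N. red m n ((TZ n ^^ (k + P)) a) = red m n ((TZ n ^^ k) a)"
  proof (intro allI impI)
    fix k assume k: "N \<le> k"
    have c: "\<forall>l<n. (TZ n ^^ (k + P)) dl l mod int m = (TZ n ^^ k) dl l mod int m"
      using N k red_eq_iff by blast
    show "red m n ((TZ n ^^ (k + P)) a) = red m n ((TZ n ^^ k) a)"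
      unfolding red_eq_iff
    proof (intro allI impI)
      fix i assume i: "i < n"
      show "(TZ n ^^ (k + P)) a i mod int m = (TZ n ^^ k) a i mod int m"
        unfolding TZpow_formula[OF n i]
      proof (rule sum_mod_cong)
        fix j assume "j \<in> {..<n}"
        have "(i + (n - j)) mod n < n" using n by simp
        then have "(TZ n ^^ (k + P)) dl ((i + (n - j)) mod n) mod int m
             = (TZ n ^^ k) dl ((i + (n - j)) mod n) mod int m" using c by blast
        then show "a j * (TZ n ^^ (k + P)) dl ((i + (n - j)) mod n) mod int m =
             a j * (TZ n ^^ k) dl ((i + (n - j)) mod n) mod int m"
          by (metis mod_mult_right_eq)
      qed
    qed
  qed
  then show ?thesis unfolding EP_def by blast
qed

definition Lp :: "nat \<Rightarrow> nat \<Rightarrow> nat" where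
  "Lp m n = (LEAST P. 0 < P \<and> EP (\<lambda>k. red m n ((TZ n ^^ k) dl)) P)"

lemma dl_EP_ex: assumes "0 < m" "0 < n" shows "\<exists>P>0. EP (\<lambda>k. red m n ((TZ n ^^ k) dl)) P"
proof (rule orbit_EP[of "vecs m n" _ "Tmap m n"])
  show "finite (vecs m n)" by (rule finite_vecs)
  show "red m n ((TZ n ^^ k) dl) \<in> vecs m n" for k using red_in_vecs[OF assms(1)] by blast
  show "red m n ((TZ n ^^ Suc k) dl) = Tmap m n (red m n ((TZ n ^^ k) dl))" for k
    using assms(2) by (simp add: Tmap_red red_TZ_red)
qed

lemma cycle_length_eq: assumes "a \<in> vecs m n" "0 < n"
  shows "cycle_length m n a = (LEAST P. 0 < P \<and> EP (\<lambda>k. red m n ((TZ n ^^ k) a)) P)"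
proof -
  have "(Tmap m n ^^ k) a = red m n ((TZ n ^^ k) a)" for k
    using Tmap_pow[OF assms(2), where m=m and k=k and x=a] red_vecs[OF assms(1)] by simp
  then show ?thesis unfolding cycle_length_def EP_def by simp
qed

lemma Pmax_Lp: assumes m: "0 < m" and n: "0 < n" shows "Pmax m n = Lp m n"
proof -
  let ?E = "\<lambda>P. EP (\<lambda>k. red m n ((TZ n ^^ k) dl)) P"
  have L: "0 < Lp m n" "?E (Lp m n)"
    using LeastI_ex[OF dl_EP_ex[OF m n, unfolded Bex_def[symmetric]]] unfolding Lp_def
    by auto
  have dvd: "cycle_length m n a dvd Lp m n" if a: "a \<in> vecs m n" for a
  proof -
    have "EP (\<lambda>k. red m n ((TZ n ^^ k) a)) (Lp m n)" by (rule period_transfer[OF n L(2)])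
    then show ?thesis unfolding cycle_length_eq[OF a n]
      using EP_least_dvd[of "\<lambda>k. red m n ((TZ n ^^ k) a)" "Lp m n" "Lp m n"] L(1) by simp
  qed
  have dlv: "red m n dl \<in> vecs m n" by (rule red_in_vecs[OF m])
  have "cycle_length m n (red m n dl) = Lp m n"
    unfolding cycle_length_eq[OF dlv n] Lp_def
    using red_eq_TZpow[OF n red_red[of m n dl]] by simp
  then have mem: "Lp m n \<in> cycle_length m n ` vecs m n" using dlv by force
  have le: "\<forall>x\<in>cycle_length m n ` vecs m n. x \<le> Lp m n"
    using dvd L(1) by (auto intro: dvd_imp_le)
  have fin: "finite (cycle_length m n ` vecs m n)"
    by (rule finite_subset[of _ "{..Lp m n}"]) (use le in auto)
  show ?thesis unfolding Pmax_def using Max_eqI[OF fin _ mem] le by blast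
qed

lemma prod_dvd_int: fixes r :: nat and p :: "nat \<Rightarrow> nat" and z :: int shows "(\<forall>i<r. \<forall>j<r. i \<noteq> j \<longrightarrow> coprime (p i) (p j)) \<Longrightarrow>
   (\<forall>i<r. int (p i) dvd z) \<Longrightarrow> int (\<Prod>i<r. p i) dvd z"
proof (induction r)
  case 0 then show ?case by simp
next
  case (Suc r)
  have a: "int (\<Prod>i<r. p i) dvd z" using Suc by auto
  have b: "int (p r) dvd z" using Suc.prems by auto
  have "coprime (\<Prod>i<r. p i) (p r)"
    by (rule prod_coprime_left) (use Suc.prems in auto)
  then have "coprime (int (\<Prod>i<r. p i)) (int (p r))" by (simp only: coprime_int_iff)
  then have "int (\<Prod>i<r. p i) * int (p r) dvd z" using divides_mult a b by blast
  then show ?case by simp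
qed

lemma mod_prod_iff: fixes r :: nat and p :: "nat \<Rightarrow> nat" and u v :: int shows "(\<forall>i<r. \<forall>j<r. i \<noteq> j \<longrightarrow> coprime (p i) (p j)) \<Longrightarrow>
   (u mod int (\<Prod>i<r. p i) = v mod int (\<Prod>i<r. p i)) \<longleftrightarrow> (\<forall>i<r. u mod int (p i) = v mod int (p i))"
proof -
  assume cop: "\<forall>i<r. \<forall>j<r. i \<noteq> j \<longrightarrow> coprime (p i) (p j)"
  have d: "int (p i) dvd int (\<Prod>i<r. p i)" if "i < r" for i
    using that by (simp only: int_dvd_int_iff) (rule dvd_prodI, auto)
  show ?thesis unfolding mod_eq_dvd_iff
    using prod_dvd_int[OF cop] d dvd_trans by blast
qed

lemma EP_prod: fixes r :: nat and p :: "nat \<Rightarrow> nat" assumes cop: "\<forall>i<r. \<forall>j<r. i \<noteq> j \<longrightarrow> coprime (p i) (p j)"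
  shows "EP (\<lambda>k. red (\<Prod>i<r. p i) n (g k)) x \<longleftrightarrow> (\<forall>i<r. EP (\<lambda>k. red (p i) n (g k)) x)"
proof -
  have R: "red (\<Prod>i<r. p i) n u = red (\<Prod>i<r. p i) n v \<longleftrightarrow> (\<forall>i<r. red (p i) n u = red (p i) n v)" for u v
    unfolding red_eq_iff mod_prod_iff[OF cop] by blast
  show ?thesis
  proof
    assume "EP (\<lambda>k. red (\<Prod>i<r. p i) n (g k)) x"
    then obtain N where "\<forall>k\<ge>N. red (\<Prod>i<r. p i) n (g (k + x)) = red (\<Prod>i<r. p i) n (g k)"
      unfolding EP_def by blast
    then show "\<forall>i<r. EP (\<lambda>k. red (p i) n (g k)) x" unfolding EP_def R by blast
  next
    assume "\<forall>i<r. EP (\<lambda>k. red (p i) n (g k)) x"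
    then have "\<forall>i. \<exists>N. i < r \<longrightarrow> (\<forall>k\<ge>N. red (p i) n (g (k + x)) = red (p i) n (g k))"
      unfolding EP_def by blast
    then obtain Nf where Nf: "\<And>i k. i < r \<Longrightarrow> k \<ge> Nf i \<Longrightarrow> red (p i) n (g (k + x)) = red (p i) n (g k)"
      by metis
    have "\<forall>k\<ge>(\<Sum>i<r. Nf i). red (\<Prod>i<r. p i) n (g (k + x)) = red (\<Prod>i<r. p i) n (g k)"
    proof (intro allI impI)
      fix k assume k: "(\<Sum>i<r. Nf i) \<le> k"
      have "\<forall>i<r. red (p i) n (g (k + x)) = red (p i) n (g k)"
      proof (intro allI impI)
        fix i assume i: "i < r"
        have "Nf i \<le> (\<Sum>i<r. Nf i)" using i by (intro member_le_sum) auto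
        then show "red (p i) n (g (k + x)) = red (p i) n (g k)" using Nf[OF i] k by simp
      qed
      then show "red (\<Prod>i<r. p i) n (g (k + x)) = red (\<Prod>i<r. p i) n (g k)" using R by blast
    qed
    then show "EP (\<lambda>k. red (\<Prod>i<r. p i) n (g k)) x" unfolding EP_def by blast
  qed
qed

lemma Lp_dvd_iff: assumes "0 < m" "0 < n"
  shows "EP (\<lambda>k. red m n ((TZ n ^^ k) dl)) x \<longleftrightarrow> Lp m n dvd x"
proof -
  obtain P where "0 < P" "EP (\<lambda>k. red m n ((TZ n ^^ k) dl)) P" using dl_EP_ex[OF assms] by blast
  then show ?thesis unfolding Lp_def using EP_least_dvd by blast
qed

theorem theorem3p2:
  fixes n r :: nat and p :: "nat \<Rightarrow> nat"
  assumes "0 < n"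
    and "\<forall>i<r. 0 < p i"
    and "\<forall>i<r. \<forall>j<r. i \<noteq> j \<longrightarrow> coprime (p i) (p j)"
  shows "Pmax (\<Prod>i<r. p i) n = Lcm ((\<lambda>i. Pmax (p i) n) ` {..<r})"
proof -
  have M: "0 < (\<Prod>i<r. p i)" using assms(2) by (simp add: prod_pos)
  have img: "(\<lambda>i. Pmax (p i) n) ` {..<r} = (\<lambda>i. Lp (p i) n) ` {..<r}"
    using Pmax_Lp assms(1,2) by auto
  have key: "Lp (\<Prod>i<r. p i) n dvd x \<longleftrightarrow> Lcm ((\<lambda>i. Lp (p i) n) ` {..<r}) dvd x" for x
  proof -
    have "Lp (\<Prod>i<r. p i) n dvd x \<longleftrightarrow> (\<forall>i<r. EP (\<lambda>k. red (p i) n ((TZ n ^^ k) dl)) x)"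
      using Lp_dvd_iff[OF M assms(1), of x]
        EP_prod[OF assms(3), where n=n and g="\<lambda>k. (TZ n ^^ k) dl" and x=x] by simp
    also have "\<dots> \<longleftrightarrow> (\<forall>i<r. Lp (p i) n dvd x)"
    proof -
      have "EP (\<lambda>k. red (p i) n ((TZ n ^^ k) dl)) x \<longleftrightarrow> Lp (p i) n dvd x" if "i < r" for i
        using Lp_dvd_iff[of "p i" n x] assms(1,2) that by simp
      then show ?thesis by blast
    qed
    also have "\<dots> \<longleftrightarrow> Lcm ((\<lambda>i. Lp (p i) n) ` {..<r}) dvd x"
      by (auto intro: Lcm_least dvd_Lcm dvd_trans)
    finally show ?thesis .
  qed
  have "Lp (\<Prod>i<r. p i) n = Lcm ((\<lambda>i. Lp (p i) n) ` {..<r})"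
    using key[of "Lp (\<Prod>i<r. p i) n"] key[of "Lcm ((\<lambda>i. Lp (p i) n) ` {..<r})"]
    by (auto intro: dvd_antisym)
  then show ?thesis using Pmax_Lp[OF M assms(1)] img by simp
qed

end
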